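(* Let $(X_n)_{n\ge0}$ be a homogeneous Markov chain on $\mathbb{R}^d$ satisfying assumptions $(\mathcal{A}_1)$ and $(\mathcal{A}_2)$ below. Then for any $0<\epsilon<\epsilon_0$ and any integer $k\ge1$, $$\sup_{x\in\mathbb{M}}\mathbb{P}_\mu\Big(\min_{1\le i\le k}\|X_i-x\|>\epsilon\Big)\le(1-\kappa\epsilon^bV_d)^k.$$
   Context: $(\mathcal{A}_1)$: the chain has an invariant probability measure $\mu$ with compact support $\mathbb{M}$. $(\mathcal{A}_2)$: the transition kernel $K(x,\cdot)=\mathbb{P}(X_1\in\cdot\mid X_0=x)$, $x\in\mathbb{M}$, satisfies $K(x,dy)=k(x,y)\nu(dy)$ for a positive measure $\nu$ on $\mathbb{M}$ and a positive function $k$; for some $b>0$ and $\epsilon_0>0$, $V_d:=\inf_{x\in\mathbb{M}}\inf_{0<\epsilon<\epsilon_0}\epsilon^{-b}\nu(B(x,\epsilon)\cap\mathbb{M})>0$; and there is $\kappa>0$ with $\inf_{x,y\in\mathbb{M}}k(x,y)\ge\kappa$. $B(x,\epsilon)$ is the closed Euclidean ball. $\mathbb{P}_\mu$ denotes probability when $X_0$ has distribution $\mu$. *)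

theory Defs
  imports "HOL-Probability.Probability"
begin

text \<open>Finite-dimensional distributions of a homogeneous Markov chain with kernel K:
  mc_fdd K [A1,...,An] x = P_x(X_1 in A1, ..., X_n in An).\<close>
fun mc_fdd :: "('a \<Rightarrow> 'a measure) \<Rightarrow> 'a set list \<Rightarrow> 'a \<Rightarrow> ennreal" where
  "mc_fdd K [] x = 1"
| "mc_fdd K (A # As) x = (\<integral>\<^sup>+ y. indicator A y * mc_fdd K As y \<partial>K x)"

definition markov_chain ::
  "'w measure \<Rightarrow> (nat \<Rightarrow> 'w \<Rightarrow> 'a::topological_space) \<Rightarrow> 'a measure \<Rightarrow> ('a \<Rightarrow> 'a measure) \<Rightarrow> bool" where
  "markov_chain P X mu K \<longleftrightarrow>
     prob_space P \<and> (\<forall>n. X n \<in> borel_measurable P) \<and>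
     (\<forall>x. prob_space (K x) \<and> sets (K x) = sets borel) \<and>
     (\<forall>A. A \<in> sets borel \<longrightarrow> (\<lambda>x. emeasure (K x) A) \<in> borel_measurable borel) \<and>
     (\<forall>A0 As. A0 \<in> sets borel \<and> set As \<subseteq> sets borel \<longrightarrow>
        emeasure P {w \<in> space P. X 0 w \<in> A0 \<and> (\<forall>i<length As. X (Suc i) w \<in> As ! i)}
        = (\<integral>\<^sup>+ x. indicator A0 x * mc_fdd K As x \<partial>mu))"

definition msupport :: "'a::metric_space measure \<Rightarrow> 'a set" where
  "msupport mu = {x. \<forall>e>0. emeasure mu (cball x e) > 0}"

definition invariant_prob :: "'a::topological_space measure \<Rightarrow> ('a \<Rightarrow> 'a measure) \<Rightarrow> bool" where
  "invariant_prob mu K \<longleftrightarrow> prob_space mu \<and> sets mu = sets borel \<and>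
     (\<forall>A\<in>sets borel. emeasure mu A = (\<integral>\<^sup>+ x. emeasure (K x) A \<partial>mu))"

end

theory Submission
  imports Defs
begin


lemma msupport_full:
  fixes mu :: "'a::{metric_space,second_countable_topology} measure"
  assumes s: "sets mu = sets borel"
  shows "\<exists>N\<in>null_sets mu. UNIV - msupport mu \<subseteq> N"
proof -
  define F where "F = {ball x e | x e. e > 0 \<and> emeasure mu (cball x e) = 0}"
  have opF: "\<And>S. S \<in> F \<Longrightarrow> open S" unfolding F_def by auto
  obtain F' where F': "F' \<subseteq> F" "countable F'" "\<Union>F' = \<Union>F" using Lindelof[OF opF] by blast
  have sub: "UNIV - msupport mu \<subseteq> \<Union>F"
  proof
    fix x assume "x \<in> UNIV - msupport mu"
    then obtain e where e: "e > 0" "\<not> emeasure mu (cball x e) > 0" unfolding msupport_def by auto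
    then have "ball x e \<in> F" unfolding F_def by (auto simp: not_less)
    then show "x \<in> \<Union>F" using e(1) by (meson UnionI centre_in_ball)
  qed
  have nF: "S \<in> null_sets mu" if "S \<in> F" for S
  proof -
    from that obtain x e where S: "S = ball x e" "emeasure mu (cball x e) = 0" unfolding F_def by auto
    have "cball x e \<in> null_sets mu" using S(2) s by (simp add: null_sets_def)
    moreover have "ball x e \<in> sets mu" using s by simp
    ultimately show ?thesis using S(1) null_sets_subset ball_subset_cball by blast
  qed
  have "(\<Union>S\<in>F'. S) \<in> null_sets mu" using F' nF by (intro null_sets_UN') auto
  then have "\<Union>F \<in> null_sets mu" using F' by simp
  then show ?thesis using sub by blast
qed


lemma kernel_facts:
  fixes K :: "'a::euclidean_space \<Rightarrow> 'a measure" and nu :: "'a measure"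
  assumes Kp: "\<forall>x. prob_space (K x) \<and> sets (K x) = sets borel"
    and nu_sets: "sets nu = sets borel"
    and nu_on_M: "emeasure nu (UNIV - M) = 0"
    and kd_meas: "\<forall>x\<in>M. kd x \<in> borel_measurable borel"
    and dens: "\<forall>x\<in>M. K x = density nu (\<lambda>y. ennreal (kd x y))"
    and kappa_pos: "kappa > 0"
    and kappa_lb: "\<forall>x\<in>M. \<forall>y\<in>M. kd x y \<ge> kappa"
    and cM: "closed M" and C: "C \<in> sets borel" and y: "y \<in> M"
  shows "emeasure (K y) (UNIV - M) = 0"
    and "measure (K y) (UNIV - C) \<le> 1 - kappa * measure nu (C \<inter> M)"
proof -
  interpret p: prob_space "K y" using Kp by auto
  have sK: "sets (K y) = sets borel" using Kp by auto
  have kb: "kd y \<in> borel_measurable borel" using kd_meas y by auto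
  have kn: "kd y \<in> borel_measurable nu" using kb by (subst measurable_cong_sets[OF nu_sets refl])
  have km: "(\<lambda>z. ennreal (kd y z)) \<in> borel_measurable nu"
    using measurable_comp[OF kn measurable_ennreal] by (simp add: comp_def)
  have Mb: "M \<in> sets borel" using cM by simp
  have "emeasure (K y) (UNIV - M) = (\<integral>\<^sup>+ z. ennreal (kd y z) * indicator (UNIV - M) z \<partial>nu)"
    using dens y km Mb nu_sets by (simp add: emeasure_density)
  also have "\<dots> = 0"
  proof -
    have "AE z in nu. z \<in> M" using nu_on_M Mb nu_sets
      by (intro AE_I'[of "UNIV - M"]) (auto simp: null_sets_def)
    then have "AE z in nu. ennreal (kd y z) * indicator (UNIV - M) z = 0" by eventually_elim auto
    from nn_integral_cong_AE[OF this] show ?thesis by simp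
  qed
  finally show "emeasure (K y) (UNIV - M) = 0" .
  have CM: "C \<inter> M \<in> sets borel" using C Mb by auto
  have "ennreal kappa * emeasure nu (C \<inter> M) = (\<integral>\<^sup>+ z. ennreal kappa * indicator (C \<inter> M) z \<partial>nu)"
    using CM nu_sets by (simp add: nn_integral_cmult_indicator)
  also have "\<dots> \<le> (\<integral>\<^sup>+ z. ennreal (kd y z) * indicator (C \<inter> M) z \<partial>nu)"
    using kappa_lb y by (intro nn_integral_mono) (auto simp: indicator_def intro: ennreal_leI)
  also have "\<dots> = emeasure (K y) (C \<inter> M)"
    using dens y km CM nu_sets by (simp add: emeasure_density)
  also have "\<dots> \<le> emeasure (K y) C" using C CM sK by (intro emeasure_mono) auto
  finally have le: "ennreal kappa * emeasure nu (C \<inter> M) \<le> emeasure (K y) C" .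
  have fin: "emeasure nu (C \<inter> M) \<noteq> \<infinity>"
  proof
    assume "emeasure nu (C \<inter> M) = \<infinity>"
    then have "ennreal kappa * emeasure nu (C \<inter> M) = \<infinity>" using kappa_pos by (simp add: ennreal_mult_top)
    then show False using le p.emeasure_finite[of C] by (simp add: top_unique)
  qed
  have "kappa * measure nu (C \<inter> M) \<le> measure (K y) C"
  proof -
    have "ennreal (kappa * measure nu (C \<inter> M)) = ennreal kappa * emeasure nu (C \<inter> M)"
      using fin kappa_pos by (simp add: emeasure_eq_ennreal_measure ennreal_mult)
    also have "\<dots> \<le> ennreal (measure (K y) C)" using le by (simp add: p.emeasure_eq_measure)
    finally show ?thesis by (simp add: ennreal_le_iff)
  qed
  moreover have "measure (K y) (UNIV - C) = 1 - measure (K y) C"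
    using p.prob_compl[of C] C sK sets_eq_imp_space_eq[OF sK] by simp
  ultimately show "measure (K y) (UNIV - C) \<le> 1 - kappa * measure nu (C \<inter> M)" by simp
qed


lemma fdd_bound:
  fixes K :: "'a::euclidean_space \<Rightarrow> 'a measure"
  assumes Kp: "\<forall>x. prob_space (K x) \<and> sets (K x) = sets borel"
    and null: "\<forall>y\<in>M. emeasure (K y) (UNIV - M) = 0"
    and Mb: "M \<in> sets borel"
    and qb: "\<forall>y\<in>M. measure (K y) D \<le> q"
    and D: "D \<in> sets borel" and q: "0 \<le> q"
  shows "\<forall>y\<in>M. mc_fdd K (replicate n D) y \<le> ennreal (q ^ n)"
proof (induction n)
  case 0
  then show ?case by simp
next
  case (Suc n)
  show ?case
  proof
    fix y assume y: "y \<in> M"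
    interpret p: prob_space "K y" using Kp by auto
    have sK: "sets (K y) = sets borel" using Kp by auto
    have ae: "AE z in K y. z \<in> M" using null y Mb sK
      by (intro AE_I'[of "UNIV - M"]) (auto simp: null_sets_def)
    have "mc_fdd K (replicate (Suc n) D) y = (\<integral>\<^sup>+ z. indicator D z * mc_fdd K (replicate n D) z \<partial>K y)"
      by simp
    also have "\<dots> \<le> (\<integral>\<^sup>+ z. ennreal (q ^ n) * indicator D z \<partial>K y)"
    proof (rule nn_integral_mono_AE)
      show "AE z in K y. indicator D z * mc_fdd K (replicate n D) z \<le> ennreal (q ^ n) * indicator D z"
        using ae
      proof eventually_elim
        case (elim z)
        then have "mc_fdd K (replicate n D) z \<le> ennreal (q ^ n)" using Suc.IH by auto
        then show ?case by (auto simp: indicator_def mult.commute)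
      qed
    qed
    also have "\<dots> = ennreal (q ^ n) * emeasure (K y) D"
      using D sK by (simp add: nn_integral_cmult_indicator)
    also have "\<dots> = ennreal (q ^ n) * ennreal (measure (K y) D)"
      by (simp add: p.emeasure_eq_measure)
    also have "\<dots> \<le> ennreal (q ^ n) * ennreal q"
      using qb y by (intro mult_left_mono ennreal_leI) auto
    also have "\<dots> = ennreal (q ^ Suc n)"
      using q by (simp add: ennreal_mult[symmetric] mult.commute)
    finally show "mc_fdd K (replicate (Suc n) D) y \<le> ennreal (q ^ Suc n)" .
  qed
qed

theorem lemma7p2:
  fixes P :: "'w measure"
    and X :: "nat \<Rightarrow> 'w \<Rightarrow> real ^ 'd"
    and mu nu :: "(real ^ 'd) measure"
    and K :: "real ^ 'd \<Rightarrow> (real ^ 'd) measure"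
    and kd :: "real ^ 'd \<Rightarrow> real ^ 'd \<Rightarrow> real"
    and M :: "(real ^ 'd) set"
    and b eps0 kappa eps :: real
    and k :: nat
  assumes chain: "markov_chain P X mu K"
    and inv: "invariant_prob mu K"
    and supp: "M = msupport mu"
    and cpt: "compact M"
    and nu_sets: "sets nu = sets borel"
    and nu_on_M: "emeasure nu (UNIV - M) = 0"
    and kd_meas: "\<forall>x\<in>M. kd x \<in> borel_measurable borel"
    and kd_pos: "\<forall>x\<in>M. \<forall>y\<in>M. kd x y > 0"
    and dens: "\<forall>x\<in>M. K x = density nu (\<lambda>y. ennreal (kd x y))"
    and b_pos: "b > 0" and eps0_pos: "eps0 > 0"
    and Vd_pos: "(INF x\<in>M. INF e\<in>{0<..<eps0}. measure nu (cball x e \<inter> M) / e powr b) > 0"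
    and kappa_pos: "kappa > 0"
    and kappa_lb: "\<forall>x\<in>M. \<forall>y\<in>M. kd x y \<ge> kappa"
    and eps: "0 < eps" "eps < eps0"
    and k: "k \<ge> 1"
  shows "(SUP x\<in>M. measure P {w \<in> space P. Min ((\<lambda>i. norm (X i w - x)) ` {1..k}) > eps})
         \<le> (1 - kappa * eps powr b *
               (INF x\<in>M. INF e\<in>{0<..<eps0}. measure nu (cball x e \<inter> M) / e powr b)) ^ k"
  proof -
  define Vd where "Vd = (INF x\<in>M. INF e\<in>{0<..<eps0}. measure nu (cball x e \<inter> M) / e powr b)"
  have Pp: "prob_space P" and Kp: "\<forall>x. prob_space (K x) \<and> sets (K x) = sets borel"
    and fdd: "\<And>A0 As. A0 \<in> sets borel \<Longrightarrow> set As \<subseteq> sets borel \<Longrightarrow>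
        emeasure P {w \<in> space P. X 0 w \<in> A0 \<and> (\<forall>i<length As. X (Suc i) w \<in> As ! i)}
        = (\<integral>\<^sup>+ x. indicator A0 x * mc_fdd K As x \<partial>mu)"
    using chain unfolding markov_chain_def by auto
  have mup: "prob_space mu" and mus: "sets mu = sets borel" using inv unfolding invariant_prob_def by auto
  show ?thesis
  proof (cases "M = {}")
    case True
    obtain N where N: "N \<in> null_sets mu" "UNIV - msupport mu \<subseteq> N" using msupport_full[OF mus] by blast
    then have "N = space mu" using True supp sets_eq_imp_space_eq[OF mus] by auto
    then have "emeasure mu (space mu) = 0" using N by auto
    then show ?thesis using mup by (simp add: prob_space.emeasure_space_1)
  next
    case False
    have cM: "closed M" using cpt compact_imp_closed by auto
    have Mb: "M \<in> sets borel" using cM by simp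
    obtain N where N: "N \<in> null_sets mu" "UNIV - msupport mu \<subseteq> N" using msupport_full[OF mus] by blast
    have aeM: "AE y in mu. y \<in> M" using N supp by (intro AE_I'[of N]) auto
    show ?thesis unfolding Vd_def[symmetric]
    proof (rule cSUP_least[OF False])
      fix x assume x: "x \<in> M"
      define C where "C = cball x eps"
      define D where "D = UNIV - C"
      define q where "q = 1 - kappa * measure nu (C \<inter> M)"
      have Cb: "C \<in> sets borel" unfolding C_def by simp
      have Db: "D \<in> sets borel" unfolding D_def using Cb by auto
      have null: "\<forall>y\<in>M. emeasure (K y) (UNIV - M) = 0"
        using kernel_facts(1)[OF Kp nu_sets nu_on_M kd_meas dens kappa_pos kappa_lb cM Cb] by blast
      have qb: "\<forall>y\<in>M. measure (K y) D \<le> q"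
        using kernel_facts(2)[OF Kp nu_sets nu_on_M kd_meas dens kappa_pos kappa_lb cM Cb]
        unfolding D_def q_def by blast
      have "measure (K x) D \<le> q" using qb x by blast
      then have q0: "0 \<le> q" using measure_nonneg[of "K x" D] by linarith
      have fb: "\<forall>y\<in>M. mc_fdd K (replicate k D) y \<le> ennreal (q ^ k)"
        by (rule fdd_bound[OF Kp null Mb qb Db q0])
      define E where "E = {w \<in> space P. Min ((\<lambda>i. norm (X i w - x)) ` {1..k}) > eps}"
      have ball: "(\<forall>i\<in>{1..k}. Q i) = (\<forall>i<k. Q (Suc i))" for Q :: "nat \<Rightarrow> bool"
        by (auto, metis Suc_pred' le_simps(3) less_Suc_eq_le not_less_eq_eq not_one_le_zero le_trans)
      have E_eq: "E = {w \<in> space P. X 0 w \<in> UNIV \<and> (\<forall>i<length (replicate k D). X (Suc i) w \<in> replicate k D ! i)}"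
      proof -
        have "(eps < Min ((\<lambda>i. norm (X i w - x)) ` {1..k})) = (\<forall>i<k. X (Suc i) w \<in> D)" for w
        proof -
          have "(eps < Min ((\<lambda>i. norm (X i w - x)) ` {1..k})) = (\<forall>i\<in>{1..k}. eps < norm (X i w - x))"
            using k by (subst Min_gr_iff) auto
          also have "\<dots> = (\<forall>i<k. eps < norm (X (Suc i) w - x))" by (rule ball)
          also have "\<dots> = (\<forall>i<k. X (Suc i) w \<in> D)"
            unfolding D_def C_def by (simp add: dist_norm norm_minus_commute not_le)
          finally show ?thesis .
        qed
        then show ?thesis unfolding E_def by auto
      qed
      have "emeasure P E = (\<integral>\<^sup>+ y. indicator UNIV y * mc_fdd K (replicate k D) y \<partial>mu)"
        unfolding E_eq using Db by (intro fdd) auto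
      also have "\<dots> \<le> (\<integral>\<^sup>+ y. ennreal (q ^ k) \<partial>mu)"
        using aeM by (intro nn_integral_mono_AE) (auto elim!: eventually_mono simp: fb)
      also have "\<dots> = ennreal (q ^ k)"
        using mup by (simp add: prob_space.emeasure_space_1)
      finally have "ennreal (measure P E) \<le> ennreal (q ^ k)"
        using prob_space.emeasure_space_1[OF Pp] finite_measure.emeasure_eq_measure[OF prob_space.finite_measure[OF Pp]] by simp
      then have mE: "measure P E \<le> q ^ k" using q0 by (simp add: ennreal_le_iff)
      have bddI: "bdd_below ((\<lambda>e. measure nu (cball y e \<inter> M) / e powr b) ` {0<..<eps0})" for y
        by (rule bdd_belowI[of _ 0]) auto
      have inner_nn: "0 \<le> (INF e\<in>{0<..<eps0}. measure nu (cball y e \<inter> M) / e powr b)" for y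
        using eps0_pos by (intro cINF_greatest) auto
      have "Vd \<le> (INF e\<in>{0<..<eps0}. measure nu (cball x e \<inter> M) / e powr b)"
        unfolding Vd_def using x inner_nn by (intro cINF_lower bdd_belowI[of _ 0]) auto
      also have "\<dots> \<le> measure nu (C \<inter> M) / eps powr b"
        unfolding C_def using eps by (intro cINF_lower bddI) auto
      finally have "Vd \<le> measure nu (C \<inter> M) / eps powr b" .
      then have "eps powr b * Vd \<le> measure nu (C \<inter> M)"
        using eps by (simp add: field_simps)
      then have "kappa * (eps powr b * Vd) \<le> kappa * measure nu (C \<inter> M)"
        using kappa_pos by (intro mult_left_mono) auto
      then have "q \<le> 1 - kappa * eps powr b * Vd" unfolding q_def by (simp add: mult.assoc)
      then have "q ^ k \<le> (1 - kappa * eps powr b * Vd) ^ k" using q0 by (intro power_mono)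
      then show "measure P {w \<in> space P. Min ((\<lambda>i. norm (X i w - x)) ` {1..k}) > eps}
          \<le> (1 - kappa * eps powr b * Vd) ^ k" using mE unfolding E_def by simp
    qed
  qed
qed

end
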